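(* Let $\mathcal{M}=(\mathbf{x},\mathbf{p})$ be an auction format, let $\boldsymbol{\pi}^{(1)},\dots,\boldsymbol{\pi}^{(n)}\in\Delta([K+1])$ be quantile strategies, let $s_i:=s_{i,\boldsymbol{\pi}^{(i)}}$, and let $\tilde{\mathcal{M}}=(\tilde{\mathbf{x}},\tilde{\mathbf{p}})$ be the auxiliary auction defined by $\tilde{\mathbf{x}}(\mathbf{v}):=\mathbf{x}(s_1(v_1),\dots,s_n(v_n))$ and $\tilde p_i(\mathbf{v}):=\tilde x_i(v_i,\mathbf{v}_{-i})v_i-\int_0^{v_i}\tilde x_i(z,\mathbf{v}_{-i})dz$. Then, writing $\Pi^{(i)}_j:=\sum_{\ell\le j}\pi^{(i)}_\ell$ and $\mathbf{b}_{-i}:=(s_\ell(v_\ell))_{\ell\ne i}$, \[ \mathbb{E}_{\mathbf{v}\sim\mathcal{D}}\Big[\sum_{i\in[n]}\tilde p_i(\mathbf{v})\Big]=\sum_{i\in[n]}\mathbb{E}_{\mathbf{v}_{-i}}\Big[\sum_{j=1}^{K}\sum_{k=j+1}^{K+1}\pi^{(i)}_k\Big(x_i\big(\tfrac{j}{K},\mathbf{b}_{-i}\big)-x_i\big(\tfrac{j-1}{K},\mathbf{b}_{-i}\big)\Big)F_i^{-1}\big(\Pi^{(i)}_j\big)\Big]. \]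
   Context: Each bidder $i\in[n]$ has value $v_i$ drawn independently from a continuous distribution $\mathcal{D}_i$ on $[0,1]$ with CDF $F_i$ and quantile function $F_i^{-1}(y):=\inf\{v\in[0,1]:F_i(v)\ge y\}$; $\mathcal{D}:=\mathcal{D}_1\times\cdots\times\mathcal{D}_n$. Bid set $B:=\{j/K:j=0,\dots,K\}$. An auction format is $(\mathbf{x},\mathbf{p})$, $\mathbf{x}:B^n\to\Delta([n])$ (nonnegative entries summing to at most 1), $\mathbf{p}:B^n\to[0,1]^n$. For a quantile strategy $\boldsymbol{\pi}\in\Delta([K+1])$ (probability simplex), with $\Pi_0:=0$, $\Pi_j:=\sum_{\ell\le j}\pi_\ell$, the strategy $s_{i,\boldsymbol{\pi}}$ bids $0$ on $[0,F_i^{-1}(\Pi_1)]$ and $\frac{j-1}{K}$ on $(F_i^{-1}(\Pi_{j-1}),F_i^{-1}(\Pi_j)]$ for $j=2,\dots,K+1$. *)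

theory Defs
  imports "HOL-Probability.Probability"
begin

definition bidset :: "nat \<Rightarrow> real set" where
  "bidset K = {real j / real K | j. j \<le> K}"

text \<open>Auction format (x,p) for n bidders: on every bid profile in B^n (bids of
  bidders 0..n-1; profiles are extensional, i.e. undefined outside {..<n}),
  x b is a sub-probability vector over the bidders and p b has entries in [0,1].\<close>
definition auction_format ::
  "nat \<Rightarrow> nat \<Rightarrow> ((nat \<Rightarrow> real) \<Rightarrow> nat \<Rightarrow> real) \<Rightarrow> ((nat \<Rightarrow> real) \<Rightarrow> nat \<Rightarrow> real) \<Rightarrow> bool" where
  "auction_format n K x p \<longleftrightarrow>
     (\<forall>b \<in> PiE {..<n} (\<lambda>_. bidset K).
        (\<forall>i<n. 0 \<le> x b i) \<and> (\<Sum>i<n. x b i) \<le> 1 \<and> (\<forall>i<n. 0 \<le> p b i \<and> p b i \<le> 1))"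

definition prob_simplex :: "nat \<Rightarrow> (nat \<Rightarrow> real) \<Rightarrow> bool" where
  "prob_simplex K \<pi> \<longleftrightarrow> (\<forall>k\<in>{1..K+1}. 0 \<le> \<pi> k) \<and> (\<Sum>k=1..K+1. \<pi> k) = 1"

definition cumul :: "(nat \<Rightarrow> real) \<Rightarrow> nat \<Rightarrow> real" where
  "cumul \<pi> j = (\<Sum>l=1..j. \<pi> l)"

definition cdf_of :: "real measure \<Rightarrow> real \<Rightarrow> real" where
  "cdf_of D v = measure D {..v}"

definition quantile :: "(real \<Rightarrow> real) \<Rightarrow> real \<Rightarrow> real" where
  "quantile F y = Inf {v \<in> {0..1}. F v \<ge> y}"

text \<open>Quantile strategy s_{F,\<pi>}: bids 0 on [0, F^{-1}(\<Pi>_1)] and (j-1)/K on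
  (F^{-1}(\<Pi>_{j-1}), F^{-1}(\<Pi>_j)] for j = 2..K+1.\<close>
definition qstrat :: "(real \<Rightarrow> real) \<Rightarrow> nat \<Rightarrow> (nat \<Rightarrow> real) \<Rightarrow> real \<Rightarrow> real" where
  "qstrat F K \<pi> v =
     (\<Sum>j=2..K+1. if quantile F (cumul \<pi> (j-1)) < v \<and> v \<le> quantile F (cumul \<pi> j)
                    then (real j - 1) / real K else 0)"

definition bids :: "nat set \<Rightarrow> (nat \<Rightarrow> real \<Rightarrow> real) \<Rightarrow> (nat \<Rightarrow> real) \<Rightarrow> nat \<Rightarrow> real" where
  "bids I s v = restrict (\<lambda>l. s l (v l)) I"

definition xtil :: "nat \<Rightarrow> ((nat \<Rightarrow> real) \<Rightarrow> nat \<Rightarrow> real) \<Rightarrow> (nat \<Rightarrow> real \<Rightarrow> real) \<Rightarrow> (nat \<Rightarrow> real) \<Rightarrow> nat \<Rightarrow> real" where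
  "xtil n x s v = x (bids {..<n} s v)"

definition ptil :: "nat \<Rightarrow> ((nat \<Rightarrow> real) \<Rightarrow> nat \<Rightarrow> real) \<Rightarrow> (nat \<Rightarrow> real \<Rightarrow> real) \<Rightarrow> (nat \<Rightarrow> real) \<Rightarrow> nat \<Rightarrow> real" where
  "ptil n x s v i = xtil n x s v i * v i - (LBINT z=0..v i. xtil n x s (v(i := z)) i)"

end

theory Submission
  imports Defs
begin

locale qdist = real_distribution D for D +
  assumes supp: "measure D {0..1} = 1"
    and cont: "continuous_on UNIV (cdf_of D)"
begin

abbreviation "F \<equiv> cdf_of D"

lemma F_eq: "F v = measure D {..v}" by (simp add: cdf_of_def)

lemma F_mono: "a \<le> b \<Longrightarrow> F a \<le> F b"
  unfolding F_eq by (intro finite_measure_mono) auto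

lemma F_le1: "F v \<le> 1" unfolding F_eq by simp
lemma F_ge0: "0 \<le> F v" unfolding F_eq by simp

lemma compl_null: "measure D (UNIV - {0..1}) = 0"
proof -
  have "measure D (space D - {0..1}) = 1 - measure D {0..1}"
    by (intro prob_compl) auto
  then show ?thesis using supp by (simp add: borel_UNIV)
qed

lemma lt0_null: "measure D {..<0} = 0"
proof -
  have "measure D {..<0} \<le> measure D (UNIV - {0..1})"
    by (intro finite_measure_mono) auto
  then show ?thesis using compl_null by (simp add: measure_nonneg antisym)
qed

lemma F0: "F 0 = 0"
proof -
  have "isCont (cdf D) 0" using cont unfolding cdf_of_def cdf_def
    by (simp add: continuous_on_eq_continuous_at)
  then have z: "measure D {0} = 0" using isCont_cdf by blast
  have "{..0::real} = {..<0} \<union> {0}" by auto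
  then have "measure D {..0::real} = measure D {..<0} + measure D {0}"
    using finite_measure_Union[of "{..<0::real}" "{0}"] by simp
  then show ?thesis using z lt0_null F_eq by simp
qed

lemma F1: "F 1 = 1"
proof -
  have "measure D {0..1} \<le> measure D {..1}" by (intro finite_measure_mono) auto
  then show ?thesis using supp F_le1[of 1] F_eq by (simp add: antisym)
qed

lemma Fcont: "continuous_on A F" using cont continuous_on_subset by blast

definition S :: "real \<Rightarrow> real set" where "S y = {v \<in> {0..1}. F v \<ge> y}"

lemma q_def': "quantile F y = Inf (S y)" by (simp add: quantile_def S_def)

lemma S_ne: "y \<le> 1 \<Longrightarrow> 1 \<in> S y" using F1 by (simp add: S_def)

lemma S_closed: "closed (S y)"
proof -
  have "S y = {0..1} \<inter> {v. y \<le> F v}" by (auto simp: S_def)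
  moreover have "closed {v. y \<le> F v}"
    by (intro closed_Collect_le continuous_intros Fcont)
  ultimately show ?thesis by auto
qed

lemma q_in_S: "y \<le> 1 \<Longrightarrow> quantile F y \<in> S y"
  unfolding q_def' by (rule closed_contains_Inf) (use S_ne S_closed in \<open>auto simp: S_def bdd_below_def\<close>)

lemma q_range: "y \<le> 1 \<Longrightarrow> 0 \<le> quantile F y \<and> quantile F y \<le> 1"
  using q_in_S by (auto simp: S_def)

lemma q_le: "y \<le> 1 \<Longrightarrow> v \<in> S y \<Longrightarrow> quantile F y \<le> v"
  unfolding q_def' by (rule cInf_lower) (auto simp: S_def bdd_below_def)

lemma q_mono: "y1 \<le> y2 \<Longrightarrow> y2 \<le> 1 \<Longrightarrow> quantile F y1 \<le> quantile F y2"
  using q_in_S[of y2] q_le[of y1 "quantile F y2"] by (auto simp: S_def)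

lemma F_q: assumes "0 \<le> y" "y \<le> 1" shows "F (quantile F y) = y"
proof -
  let ?q = "quantile F y"
  have qS: "?q \<in> S y" using q_in_S assms by auto
  then have "y \<le> F ?q" "0 \<le> ?q" "?q \<le> 1" by (auto simp: S_def)
  moreover have "F 0 \<le> y" using F0 assms by simp
  ultimately obtain c where c: "0 \<le> c" "c \<le> ?q" "F c = y"
    using IVT'[of F 0 y ?q] Fcont by blast
  then have "c \<in> S y" using \<open>?q \<le> 1\<close> by (auto simp: S_def)
  then have "?q \<le> c" using q_le assms by auto
  with c show ?thesis by simp
qed

end

locale qctx = qdist D for D +
  fixes K :: nat and \<pi> :: "nat \<Rightarrow> real"
  assumes Kpos: "0 < K" and simp_pi: "prob_simplex K \<pi>"
begin

definition q :: "nat \<Rightarrow> real" where "q j = quantile F (cumul \<pi> j)"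

lemma pi_nn: "k \<in> {1..K+1} \<Longrightarrow> 0 \<le> \<pi> k" using simp_pi by (auto simp: prob_simplex_def)

lemma cumul_mono: "j1 \<le> j2 \<Longrightarrow> j2 \<le> K+1 \<Longrightarrow> cumul \<pi> j1 \<le> cumul \<pi> j2"
  unfolding cumul_def by (intro sum_mono2) (auto intro: pi_nn)

lemma cumul_ge0: "j \<le> K+1 \<Longrightarrow> 0 \<le> cumul \<pi> j"
  unfolding cumul_def by (intro sum_nonneg) (auto intro: pi_nn)

lemma cumul_top: "cumul \<pi> (K+1) = 1" using simp_pi by (simp add: prob_simplex_def cumul_def)

lemma cumul_le1: "j \<le> K+1 \<Longrightarrow> cumul \<pi> j \<le> 1" using cumul_mono[of j "K+1"] cumul_top by simp

lemma q_mono': "j1 \<le> j2 \<Longrightarrow> j2 \<le> K+1 \<Longrightarrow> q j1 \<le> q j2"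
  unfolding q_def by (intro q_mono cumul_mono cumul_le1) auto

lemma q_rng: "j \<le> K+1 \<Longrightarrow> 0 \<le> q j \<and> q j \<le> 1"
  unfolding q_def by (intro q_range cumul_le1)

lemma Fq: "j \<le> K+1 \<Longrightarrow> F (q j) = cumul \<pi> j"
  unfolding q_def by (intro F_q cumul_ge0 cumul_le1)

definition cnd :: "nat \<Rightarrow> real \<Rightarrow> bool" where "cnd j z \<longleftrightarrow> q (j-1) < z \<and> z \<le> q j"

lemma disj: "j \<in> {2..K+1} \<Longrightarrow> j' \<in> {2..K+1} \<Longrightarrow> cnd j z \<Longrightarrow> cnd j' z \<Longrightarrow> j = j'"
proof (rule ccontr)
  assume a: "j \<in> {2..K+1}" "j' \<in> {2..K+1}" "cnd j z" "cnd j' z" "j \<noteq> j'"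
  show False
  proof (cases "j < j'")
    case True
    then have "q j \<le> q (j'-1)" using a by (intro q_mono') auto
    then show False using a unfolding cnd_def by auto
  next
    case False
    then have "q j' \<le> q (j-1)" using a by (intro q_mono') auto
    then show False using a unfolding cnd_def by auto
  qed
qed

lemma qs_eq: "qstrat F K \<pi> z = (\<Sum>j=2..K+1. if cnd j z then (real j - 1) / real K else 0)"
  unfolding qstrat_def cnd_def q_def by simp

lemma sum_single:
  fixes g :: "nat \<Rightarrow> real"
  assumes "j \<in> {2..K+1}" "cnd j z"
  shows "(\<Sum>j'=2..K+1. if cnd j' z then g j' else 0) = g j"
proof -
  have "(\<Sum>j'=2..K+1. if cnd j' z then g j' else 0) = (if cnd j z then g j else 0) +
      (\<Sum>j'\<in>{2..K+1}-{j}. if cnd j' z then g j' else 0)"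
    using assms by (subst sum.remove[of _ j]) auto
  also have "(\<Sum>j'\<in>{2..K+1}-{j}. if cnd j' z then g j' else 0) = 0"
    using disj[OF assms(1) _ assms(2)] by (intro sum.neutral) (auto)
  finally show ?thesis using assms by simp
qed

lemma sum_none:
  fixes g :: "nat \<Rightarrow> real"
  assumes "\<forall>j\<in>{2..K+1}. \<not> cnd j z"
  shows "(\<Sum>j'=2..K+1. if cnd j' z then g j' else 0) = 0"
  using assms by (intro sum.neutral) auto

lemma phi_qs:
  fixes \<phi> :: "real \<Rightarrow> real"
  shows "\<phi> (qstrat F K \<pi> z) = \<phi> 0 + (\<Sum>j=2..K+1. (\<phi> ((real j - 1) / real K) - \<phi> 0) * indicator {q (j-1)<..q j} z)"
proof -
  have ind: "(\<Sum>j=2..K+1. (\<phi> ((real j - 1) / real K) - \<phi> 0) * indicator {q (j-1)<..q j} z)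
     = (\<Sum>j=2..K+1. if cnd j z then \<phi> ((real j - 1) / real K) - \<phi> 0 else 0)"
    by (intro sum.cong) (auto simp: cnd_def indicator_def)
  show ?thesis
  proof (cases "\<exists>j\<in>{2..K+1}. cnd j z")
    case True
    then obtain j where j: "j \<in> {2..K+1}" "cnd j z" by blast
    show ?thesis unfolding ind qs_eq sum_single[OF j] by simp
  next
    case False
    then show ?thesis unfolding ind qs_eq using sum_none[OF ballI] by simp
  qed
qed

lemma qs_bid: "qstrat F K \<pi> z \<in> bidset K"
proof (cases "\<exists>j\<in>{2..K+1}. cnd j z")
  case True
  then obtain j where j: "j \<in> {2..K+1}" "cnd j z" by blast
  have "qstrat F K \<pi> z = real (j-1) / real K" unfolding qs_eq sum_single[OF j] using j by auto
  then show ?thesis using j unfolding bidset_def by (intro CollectI exI[of _ "j-1"]) auto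
next
  case False
  then have "qstrat F K \<pi> z = real 0 / real K" unfolding qs_eq using sum_none[OF ballI] by simp
  then show ?thesis unfolding bidset_def by blast
qed

end

lemma int_Ioc: "integrable lborel (indicator {a<..c::real} :: real \<Rightarrow> real)"
proof (cases "a \<le> c")
  case True then show ?thesis by (simp add: integrable_indicator_iff emeasure_lborel_Ioc)
next
  case False then show ?thesis by (simp add: integrable_indicator_iff)
qed

lemma int_Icc: "integrable lborel (indicator {a..c::real} :: real \<Rightarrow> real)"
proof (cases "a \<le> c")
  case True then show ?thesis by (simp add: integrable_indicator_iff emeasure_lborel_Icc)
next
  case False then show ?thesis by (simp add: integrable_indicator_iff)
qed

lemma meas_Ioc: "measure lborel {a<..c::real} = max 0 (c - a)"
  by (cases "a \<le> c") auto

lemma lbint_step: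
  fixes J :: "nat set" and a b c :: "nat \<Rightarrow> real" and c0 t :: real
  assumes J: "finite J" and ab: "\<And>j. j \<in> J \<Longrightarrow> 0 \<le> a j \<and> a j \<le> b j"
  shows "(LBINT z=0..t. c0 + (\<Sum>j\<in>J. c j * indicator {a j<..b j} z))
       = c0 * t + (\<Sum>j\<in>J. c j * (min t (b j) - min t (a j)))"
proof (cases "0 \<le> t")
  case True
  have "(LBINT z=0..t. c0 + (\<Sum>j\<in>J. c j * indicator {a j<..b j} z))
     = (LBINT z:{0..t}. c0 + (\<Sum>j\<in>J. c j * indicator {a j<..b j} z))"
    using interval_integral_Icc[of 0 t] True by (simp add: zero_ereal_def)
  also have "\<dots> = (\<integral>z. c0 * indicator {0..t} z + (\<Sum>j\<in>J. c j * indicator {a j<..min t (b j)} z) \<partial>lborel)"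
    unfolding set_lebesgue_integral_def
  proof (rule Bochner_Integration.integral_cong[OF refl])
    fix z :: real
    have "\<And>j. j \<in> J \<Longrightarrow> indicator {0..t} z * indicator {a j<..b j} z = (indicator {a j<..min t (b j)} z :: real)"
      using ab by (force simp: indicator_def)
    then show "indicator {0..t} z *\<^sub>R (c0 + (\<Sum>j\<in>J. c j * indicator {a j<..b j} z)) =
        c0 * indicator {0..t} z + (\<Sum>j\<in>J. c j * indicator {a j<..min t (b j)} z)"
      by (simp add: algebra_simps sum_distrib_left)
  qed
  also have "\<dots> = c0 * measure lborel {0..t} + (\<Sum>j\<in>J. c j * measure lborel {a j<..min t (b j)})"
  proof -
    have i1: "integrable lborel (\<lambda>z. c0 * indicator {0..t} z :: real)"
      using int_Icc by (intro integrable_mult_right)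
    have i2: "\<And>j. integrable lborel (\<lambda>z. c j * indicator {a j<..min t (b j)} z :: real)"
      using int_Ioc by (intro integrable_mult_right)
    have "(\<integral>z. c0 * indicator {0..t} z + (\<Sum>j\<in>J. c j * indicator {a j<..min t (b j)} z) \<partial>lborel)
       = (\<integral>z. c0 * indicator {0..t} z \<partial>lborel) + (\<integral>z. (\<Sum>j\<in>J. c j * indicator {a j<..min t (b j)} z) \<partial>lborel)"
      by (rule Bochner_Integration.integral_add[OF i1 Bochner_Integration.integrable_sum[OF i2]])
    also have "\<dots> = c0 * measure lborel {0..t} + (\<Sum>j\<in>J. c j * measure lborel {a j<..min t (b j)})"
      using i2 by (subst Bochner_Integration.integral_sum) (auto simp del: measure_lborel_Icc measure_lborel_Ioc)
    finally show ?thesis .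
  qed
  also have "\<dots> = c0 * t + (\<Sum>j\<in>J. c j * (min t (b j) - min t (a j)))"
  proof -
    have "measure lborel {a j<..min t (b j)} = min t (b j) - min t (a j)" if "j \<in> J" for j
      using ab[OF that] unfolding meas_Ioc by (auto simp: min_def max_def)
    then show ?thesis using True by (auto intro!: sum.cong)
  qed
  finally show ?thesis .
next
  case False
  have "(LBINT z=0..t. c0 + (\<Sum>j\<in>J. c j * indicator {a j<..b j} z))
    = - (\<integral>z. indicator {t<..<0} z *\<^sub>R (c0 + (\<Sum>j\<in>J. c j * indicator {a j<..b j} z)) \<partial>lborel)"
    using False by (simp add: interval_lebesgue_integral_def set_lebesgue_integral_def zero_ereal_def)
  also have "\<dots> = - (\<integral>z. c0 * indicator {t<..<0} z \<partial>lborel)"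
  proof -
    have pw: "\<And>z. indicator {t<..<0} z *\<^sub>R (c0 + (\<Sum>j\<in>J. c j * indicator {a j<..b j} z)) = c0 * (indicator {t<..<0} z :: real)"
    proof -
      fix z :: real
      show "indicator {t<..<0} z *\<^sub>R (c0 + (\<Sum>j\<in>J. c j * indicator {a j<..b j} z)) = c0 * (indicator {t<..<0} z :: real)"
      proof (cases "z < 0")
        case True
        then have "\<And>j. j \<in> J \<Longrightarrow> indicator {a j<..b j} z = (0::real)" using ab
          by (force simp: indicator_def)
        then show ?thesis by simp
      next
        case False then show ?thesis by simp
      qed
    qed
    show ?thesis by (simp only: pw)
  qed
  also have "\<dots> = c0 * t" using False by simp
  also have "\<dots> = c0 * t + (\<Sum>j\<in>J. c j * (min t (b j) - min t (a j)))"
  proof -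
    have "min t (b j) = t \<and> min t (a j) = t" if "j \<in> J" for j using ab[OF that] False by auto
    then show ?thesis by simp
  qed
  finally show ?thesis .
qed

lemma abel_id:
  fixes d T :: "nat \<Rightarrow> real"
  shows "(\<Sum>m=1..N. (d m - d 0) * (T m - T (Suc m))) = (\<Sum>m=1..N. (d m - d (m-1)) * T m) - (d N - d 0) * T (Suc N)"
proof (induction N)
  case 0 then show ?case by simp
next
  case (Suc N)
  then show ?case by (simp add: algebra_simps)
qed

context qctx
begin

definition hh :: "nat \<Rightarrow> real \<Rightarrow> real" where
  "hh j y = q (j-1) * indicator {q (j-1)<..q j} y - (q j - q (j-1)) * indicator {q j<..} y"

definition EE :: "nat \<Rightarrow> real" where
  "EE j = q (j-1) * \<pi> j - (q j - q (j-1)) * (1 - cumul \<pi> j)"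

lemma P_eq:
  fixes \<phi> :: "real \<Rightarrow> real"
  shows "\<phi> (qstrat F K \<pi> y) * y - (LBINT z=0..y. \<phi> (qstrat F K \<pi> z))
     = (\<Sum>j=2..K+1. (\<phi> ((real j - 1) / real K) - \<phi> 0) * hh j y)"
proof -
  let ?c = "\<lambda>j. \<phi> ((real j - 1) / real K) - \<phi> 0"
  have ab: "\<And>j. j \<in> {2..K+1} \<Longrightarrow> 0 \<le> q (j-1) \<and> q (j-1) \<le> q j"
    using q_rng q_mono' by auto
  have "(LBINT z=0..y. \<phi> (qstrat F K \<pi> z)) =
      (LBINT z=0..y. \<phi> 0 + (\<Sum>j=2..K+1. ?c j * indicator {q (j-1)<..q j} z))"
    by (simp only: phi_qs)
  also have "\<dots> = \<phi> 0 * y + (\<Sum>j=2..K+1. ?c j * (min y (q j) - min y (q (j-1))))"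
    by (rule lbint_step) (use ab in auto)
  finally have I: "(LBINT z=0..y. \<phi> (qstrat F K \<pi> z)) = \<phi> 0 * y + (\<Sum>j=2..K+1. ?c j * (min y (q j) - min y (q (j-1))))" .
  have pw: "indicator {q (j-1)<..q j} y * y - (min y (q j) - min y (q (j-1))) = hh j y"
    if "j \<in> {2..K+1}" for j
    using ab[OF that] unfolding hh_def by (auto simp: indicator_def min_def)
  have "\<phi> (qstrat F K \<pi> y) * y - (LBINT z=0..y. \<phi> (qstrat F K \<pi> z))
     = (\<Sum>j=2..K+1. ?c j * indicator {q (j-1)<..q j} y) * y - (\<Sum>j=2..K+1. ?c j * (min y (q j) - min y (q (j-1))))"
    unfolding I phi_qs[of \<phi> y] by (simp add: algebra_simps)
  also have "\<dots> = (\<Sum>j=2..K+1. ?c j * indicator {q (j-1)<..q j} y * y - ?c j * (min y (q j) - min y (q (j-1))))"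
    by (simp only: sum_distrib_right sum_subtractf)
  also have "\<dots> = (\<Sum>j=2..K+1. ?c j * hh j y)"
  proof (intro sum.cong refl)
    fix j assume j: "j \<in> {2..K+1}"
    have "?c j * indicator {q (j-1)<..q j} y * y - ?c j * (min y (q j) - min y (q (j-1)))
      = ?c j * (indicator {q (j-1)<..q j} y * y - (min y (q j) - min y (q (j-1))))"
      by (simp add: algebra_simps)
    then show "?c j * indicator {q (j-1)<..q j} y * y - ?c j * (min y (q j) - min y (q (j-1))) = ?c j * hh j y"
      using pw[OF j] by simp
  qed
  finally show ?thesis .
qed

lemma hh_meas[measurable]: "hh j \<in> borel_measurable borel"
  unfolding hh_def by measurable

lemma hh_int: "integrable D (hh j)"
proof -
  have "integrable D (\<lambda>y. q (j-1) * indicator {q (j-1)<..q j} y - (q j - q (j-1)) * indicator {q j<..} y)"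
    by (intro Bochner_Integration.integrable_diff integrable_mult_right) (auto simp: integrable_indicator_iff less_top[symmetric] borel_UNIV)
  then show ?thesis unfolding hh_def .
qed

lemma cumul_Suc: "cumul \<pi> (Suc m) = cumul \<pi> m + \<pi> (Suc m)"
  unfolding cumul_def by simp

lemma hh_E: assumes j: "j \<in> {2..K+1}" shows "(\<integral>y. hh j y \<partial>D) = EE j"
proof -
  have m1: "measure D {q (j-1)<..q j} = \<pi> j"
  proof -
    have "q (j-1) \<le> q j" using j by (intro q_mono') auto
    have "{..q (j-1)} \<union> {q (j-1)<..q j} = {..q j}" using \<open>q (j-1) \<le> q j\<close> by auto
    then have "measure D {..q j} = measure D {..q (j-1)} + measure D {q (j-1)<..q j}"
      using finite_measure_Union[of "{..q (j-1)}" "{q (j-1)<..q j}"] by (auto simp: disjoint_iff)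
    moreover have "cumul \<pi> j = cumul \<pi> (j-1) + \<pi> j" using j cumul_Suc[of "j-1"] by auto
    ultimately show ?thesis using Fq[of j] Fq[of "j-1"] j unfolding F_eq by auto
  qed
  have m2: "measure D {q j<..} = 1 - cumul \<pi> j"
  proof -
    have "measure D (space D - {..q j}) = 1 - measure D {..q j}" by (intro prob_compl) auto
    moreover have "space D - {..q j} = {q j<..}" by (auto simp: borel_UNIV)
    ultimately show ?thesis using Fq[of j] j unfolding F_eq by auto
  qed
  have "(\<integral>y. hh j y \<partial>D) = q (j-1) * measure D {q (j-1)<..q j} - (q j - q (j-1)) * measure D {q j<..}"
    unfolding hh_def
    by (subst Bochner_Integration.integral_diff) (auto simp: integrable_indicator_iff borel_UNIV less_top[symmetric])
  then show ?thesis unfolding m1 m2 EE_def .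
qed

lemma tail_sum: "j \<le> K+1 \<Longrightarrow> (\<Sum>k=j+1..K+1. \<pi> k) = 1 - cumul \<pi> j"
proof -
  assume j: "j \<le> K+1"
  have "{1..K+1} = {1..j} \<union> {j+1..K+1}" using j by auto
  moreover have "sum \<pi> ({1..j} \<union> {j+1..K+1}) = sum \<pi> {1..j} + sum \<pi> {j+1..K+1}"
    by (intro sum.union_disjoint) auto
  ultimately have "(\<Sum>k=1..K+1. \<pi> k) = (\<Sum>k=1..j. \<pi> k) + (\<Sum>k=j+1..K+1. \<pi> k)"
    by metis
  then show ?thesis using cumul_top unfolding cumul_def by simp
qed

lemma alg:
  fixes \<phi> :: "real \<Rightarrow> real"
  shows "(\<Sum>j=2..K+1. (\<phi> ((real j - 1) / real K) - \<phi> 0) * EE j)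
    = (\<Sum>j=1..K. \<Sum>k=j+1..K+1. \<pi> k * (\<phi> (real j / real K) - \<phi> ((real j - 1) / real K)) * q j)"
proof -
  define d where "d m = \<phi> (real m / real K)" for m
  define T where "T m = q m * (1 - cumul \<pi> m)" for m
  have ET: "EE (Suc m) = T m - T (Suc m)" if "m \<le> K" for m
    unfolding EE_def T_def using cumul_Suc[of m] by (simp add: algebra_simps)
  have "(\<Sum>j=2..K+1. (\<phi> ((real j - 1) / real K) - \<phi> 0) * EE j)
      = (\<Sum>m=1..K. (\<phi> ((real (Suc m) - 1) / real K) - \<phi> 0) * EE (Suc m))"
  proof -
    define g where "g j = (\<phi> ((real j - 1) / real K) - \<phi> 0) * EE j" for j
    have "sum g {Suc 1..Suc K} = sum (\<lambda>i. g (Suc i)) {1..K}" by (rule sum.shift_bounds_cl_Suc_ivl)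
    moreover have "{Suc 1..Suc K} = {2..K+1}" by simp
    ultimately have e: "sum g {2..K+1} = sum (\<lambda>i. g (Suc i)) {1..K}" by metis
    from e show ?thesis unfolding g_def[abs_def] .
  qed
  also have "\<dots> = (\<Sum>m=1..K. (d m - d 0) * (T m - T (Suc m)))"
    using ET by (intro sum.cong) (auto simp: d_def)
  also have "\<dots> = (\<Sum>m=1..K. (d m - d (m-1)) * T m) - (d K - d 0) * T (Suc K)"
    by (rule abel_id)
  also have "T (Suc K) = 0" unfolding T_def using cumul_top by simp
  also have "(\<Sum>m=1..K. (d m - d (m-1)) * T m) =
     (\<Sum>j=1..K. \<Sum>k=j+1..K+1. \<pi> k * (\<phi> (real j / real K) - \<phi> ((real j - 1) / real K)) * q j)"
  proof (intro sum.cong refl)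
    fix j assume j: "j \<in> {1..K}"
    have "(\<Sum>k=j+1..K+1. \<pi> k * (\<phi> (real j / real K) - \<phi> ((real j - 1) / real K)) * q j)
       = (\<Sum>k=j+1..K+1. \<pi> k) * ((\<phi> (real j / real K) - \<phi> ((real j - 1) / real K)) * q j)"
      by (simp only: sum_distrib_right mult.assoc)
    also have "\<dots> = (1 - cumul \<pi> j) * ((\<phi> (real j / real K) - \<phi> ((real j - 1) / real K)) * q j)"
      proof - have "j \<le> K+1" using j by simp then show ?thesis using tail_sum[of j] by (simp only:) qed
    finally show "(d j - d (j-1)) * T j = (\<Sum>k=j+1..K+1. \<pi> k * (\<phi> (real j / real K) - \<phi> ((real j - 1) / real K)) * q j)"
      using j unfolding d_def T_def by (simp add: of_nat_diff)
  qed
  finally show ?thesis by simp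
qed

end

lemma fin_meas:
  fixes g :: "'a \<Rightarrow> 'b" and h :: "'b \<Rightarrow> real"
  assumes P: "finite P" and g: "\<And>v. v \<in> space M \<Longrightarrow> g v \<in> P"
    and S: "\<And>p. p \<in> P \<Longrightarrow> {v \<in> space M. g v = p} \<in> sets M"
  shows "(\<lambda>v. h (g v)) \<in> borel_measurable M"
proof -
  have "(\<lambda>v. \<Sum>p\<in>P. h p * indicator {v \<in> space M. g v = p} v) \<in> borel_measurable M"
    using S by (intro borel_measurable_sum borel_measurable_times borel_measurable_const borel_measurable_indicator) auto
  moreover have "\<And>v. v \<in> space M \<Longrightarrow> (\<Sum>p\<in>P. h p * indicator {v \<in> space M. g v = p} v) = h (g v)"
  proof -
    fix v assume v: "v \<in> space M"
    have "(\<Sum>p\<in>P. h p * indicator {v \<in> space M. g v = p} v) = (\<Sum>p\<in>P. if p = g v then h p else 0)"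
      using v by (intro sum.cong) (auto simp: indicator_def)
    also have "\<dots> = h (g v)" using P g[OF v] by (simp add: sum.delta')
    finally show "(\<Sum>p\<in>P. h p * indicator {v \<in> space M. g v = p} v) = h (g v)" .
  qed
  ultimately show ?thesis using measurable_cong by (smt (verit))
qed

lemma bids_upd: "i \<in> I \<Longrightarrow> bids I s (v(i:=z)) = (bids (I-{i}) s v)(i := s i z)"
  by (auto simp: bids_def restrict_def fun_eq_iff)

lemma bids_ign: "bids (I-{i}) s (v(i:=z)) = bids (I-{i}) s v"
  by (auto simp: bids_def restrict_def fun_eq_iff)

lemma bidset_fin: "finite (bidset K)"
proof -
  have "bidset K = (\<lambda>j. real j / real K) ` {..K}" unfolding bidset_def by auto
  then show ?thesis by simp
qed

lemma bidset_j: "j \<in> {1..K+1} \<Longrightarrow> (real j - 1) / real K \<in> bidset K"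
  unfolding bidset_def by (intro CollectI exI[of _ "j-1"]) (auto simp: of_nat_diff)

lemma bidset_0: "0 \<in> bidset K"
  unfolding bidset_def by (intro CollectI exI[of _ 0]) auto

locale auc =
  fixes n K :: nat
    and D :: "nat \<Rightarrow> real measure"
    and x p :: "(nat \<Rightarrow> real) \<Rightarrow> nat \<Rightarrow> real"
    and \<pi> :: "nat \<Rightarrow> nat \<Rightarrow> real"
  assumes K_pos: "0 < K"
    and D_prob: "\<And>i. i < n \<Longrightarrow> prob_space (D i)"
    and D_borel: "\<And>i. i < n \<Longrightarrow> sets (D i) = sets borel"
    and D_supp: "\<And>i. i < n \<Longrightarrow> measure (D i) {0..1} = 1"
    and D_cont: "\<And>i. i < n \<Longrightarrow> continuous_on UNIV (cdf_of (D i))"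
    and M: "auction_format n K x p"
    and pi: "\<And>i. i < n \<Longrightarrow> prob_simplex K (\<pi> i)"
begin

definition ss :: "nat \<Rightarrow> real \<Rightarrow> real" where "ss i = qstrat (cdf_of (D i)) K (\<pi> i)"

lemma Qi: "i < n \<Longrightarrow> qctx (D i) K (\<pi> i)"
  unfolding qctx_def qdist_def real_distribution_def real_distribution_axioms_def
    qdist_axioms_def qctx_axioms_def
  using K_pos D_prob D_borel D_supp D_cont pi by auto

lemma ss_bid: "l < n \<Longrightarrow> ss l z \<in> bidset K"
proof -
  assume l: "l < n"
  interpret Q: qctx "D l" K "\<pi> l" by (rule Qi[OF l])
  show ?thesis unfolding ss_def by (rule Q.qs_bid)
qed

lemma ss_meas: "ss l \<in> borel_measurable borel"
  unfolding ss_def qstrat_def by measurable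

lemma ss_comp: "l \<in> J \<Longrightarrow> l < n \<Longrightarrow> (\<lambda>v. ss l (v l)) \<in> borel_measurable (PiM J D)"
proof -
  assume l: "l \<in> J" "l < n"
  have "ss l \<in> borel_measurable (D l)"
    using ss_meas measurable_cong_sets[OF D_borel[OF l(2)] refl] by blast
  then show ?thesis using measurable_compose[OF measurable_component_singleton[OF l(1)]] by blast
qed

abbreviation "I \<equiv> {..<n}"

definition phi :: "nat \<Rightarrow> (nat \<Rightarrow> real) \<Rightarrow> real \<Rightarrow> real" where
  "phi i v b = x ((bids (I - {i}) ss v)(i := b)) i"

lemma prof_in: "b \<in> bidset K \<Longrightarrow> i < n \<Longrightarrow> (bids (I-{i}) ss v)(i:=b) \<in> PiE I (\<lambda>_. bidset K)"
  using ss_bid by (auto simp: bids_def PiE_def extensional_def)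

lemma x_bnd: "pr \<in> PiE I (\<lambda>_. bidset K) \<Longrightarrow> i < n \<Longrightarrow> 0 \<le> x pr i \<and> x pr i \<le> 1"
proof -
  assume a: "pr \<in> PiE I (\<lambda>_. bidset K)" "i < n"
  then have nn: "\<forall>l<n. 0 \<le> x pr l" and s1: "(\<Sum>l<n. x pr l) \<le> 1"
    using M unfolding auction_format_def by auto
  have "x pr i \<le> (\<Sum>l<n. x pr l)" using a nn by (intro member_le_sum) auto
  then show ?thesis using nn s1 a by auto
qed

lemma phi_bnd: "b \<in> bidset K \<Longrightarrow> i < n \<Longrightarrow> 0 \<le> phi i v b \<and> phi i v b \<le> 1"
  unfolding phi_def using x_bnd prof_in by blast

lemma prof_eq: assumes "pr \<in> PiE I (\<lambda>_. bidset K)" "i < n"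
  shows "((bids (I-{i}) ss v)(i:=b) = pr) \<longleftrightarrow> (pr i = b \<and> (\<forall>l\<in>I-{i}. ss l (v l) = pr l))"
proof
  assume "(bids (I-{i}) ss v)(i:=b) = pr"
  then show "pr i = b \<and> (\<forall>l\<in>I-{i}. ss l (v l) = pr l)"
    by (auto simp: bids_def fun_eq_iff split: if_splits)
next
  assume h: "pr i = b \<and> (\<forall>l\<in>I-{i}. ss l (v l) = pr l)"
  show "(bids (I-{i}) ss v)(i:=b) = pr"
  proof
    fix l
    show "((bids (I-{i}) ss v)(i:=b)) l = pr l"
      using h assms by (cases "l \<in> I") (auto simp: bids_def PiE_def extensional_def)
  qed
qed

lemma phi_meas: assumes i: "i < n" and b: "b \<in> bidset K"
  shows "(\<lambda>v. phi i v b) \<in> borel_measurable (PiM I D)"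
  unfolding phi_def
proof (rule fin_meas[where P = "PiE I (\<lambda>_. bidset K)" and g = "\<lambda>v. (bids (I-{i}) ss v)(i:=b)" and h = "\<lambda>pr. x pr i"])
  show "finite (PiE I (\<lambda>_. bidset K))" using bidset_fin by (intro finite_PiE) auto
  show "\<And>v. (bids (I - {i}) ss v)(i := b) \<in> PiE I (\<lambda>_. bidset K)" using prof_in[OF b i] by blast
  fix pr assume pr: "pr \<in> PiE I (\<lambda>_. bidset K)"
  have "{v \<in> space (PiM I D). (bids (I - {i}) ss v)(i := b) = pr}
     = {v \<in> space (PiM I D). pr i = b \<and> (\<forall>l\<in>I-{i}. ss l (v l) = pr l)}"
    using prof_eq[OF pr i] by auto
  also have "\<dots> \<in> sets (PiM I D)"
  proof (cases "pr i = b")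
    case True
    have "{v \<in> space (PiM I D). \<forall>l\<in>I-{i}. ss l (v l) = pr l} \<in> sets (PiM I D)"
    proof -
      have m: "{v \<in> space (PiM I D). ss l (v l) = pr l} \<in> sets (PiM I D)" if l: "l \<in> I - {i}" for l
      proof -
        have f: "(\<lambda>v. ss l (v l)) \<in> borel_measurable (PiM I D)" using l by (intro ss_comp) auto
        have "{v \<in> space (PiM I D). ss l (v l) = pr l} = (\<lambda>v. ss l (v l)) -` {pr l} \<inter> space (PiM I D)" by auto
        also have "\<dots> \<in> sets (PiM I D)" by (rule measurable_sets[OF f]) simp
        finally show ?thesis .
      qed
      show ?thesis using m by (intro sets.sets_Collect_finite_All) auto
    qed
    then show ?thesis using True by simp
  qed simp
  finally show "{v \<in> space (PiM I D). (bids (I - {i}) ss v)(i := b) = pr} \<in> sets (PiM I D)" .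
qed

end

context auc
begin

lemma phi_ign: "phi i (w(i:=y)) b = phi i w b"
  unfolding phi_def by (simp add: bids_ign)

lemma ptil_eq: assumes i: "i < n"
  shows "ptil n x ss v i = (\<Sum>j=2..K+1. (phi i v ((real j - 1) / real K) - phi i v 0) * qctx.hh (D i) (\<pi> i) j (v i))"
proof -
  interpret Q: qctx "D i" K "\<pi> i" by (rule Qi[OF i])
  have xt: "xtil n x ss (v(i:=z)) i = phi i v (ss i z)" for z
    unfolding xtil_def phi_def using bids_upd[of i I ss v z] i by simp
  have xt0: "xtil n x ss v i = phi i v (ss i (v i))" using xt[of "v i"] by simp
  have "ptil n x ss v i = phi i v (qstrat Q.F K (\<pi> i) (v i)) * v i - (LBINT z=0..v i. phi i v (qstrat Q.F K (\<pi> i) z))"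
    by (simp only: ptil_def xt0 xt ss_def)
  also have "\<dots> = (\<Sum>j=2..K+1. (phi i v ((real j - 1) / real K) - phi i v 0) * Q.hh j (v i))"
    by (rule Q.P_eq)
  finally show ?thesis .
qed

lemma ptil_int: assumes i: "i < n"
  shows "integrable (PiM I D) (\<lambda>v. ptil n x ss v i)"
proof -
  interpret Q: qctx "D i" K "\<pi> i" by (rule Qi[OF i])
  interpret P: prob_space "PiM I D" by (intro prob_space_PiM D_prob) auto
  have hm: "Q.hh j \<in> borel_measurable (D i)" for j
    using Q.hh_meas measurable_cong_sets[OF D_borel[OF i] refl] by blast
  have term_int: "integrable (PiM I D) (\<lambda>v. (phi i v ((real j - 1) / real K) - phi i v 0) * Q.hh j (v i))"
    if j: "j \<in> {2..K+1}" for j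
  proof (rule P.integrable_const_bound[where B = "\<bar>Q.q (j-1)\<bar> + \<bar>Q.q j - Q.q (j-1)\<bar>"])
    have b1: "(real j - 1) / real K \<in> bidset K" using j by (intro bidset_j) auto
    show "AE v in PiM I D. norm ((phi i v ((real j - 1) / real K) - phi i v 0) * Q.hh j (v i))
        \<le> \<bar>Q.q (j-1)\<bar> + \<bar>Q.q j - Q.q (j-1)\<bar>"
    proof (rule AE_I2)
      fix v
      have c: "\<bar>phi i v ((real j - 1) / real K) - phi i v 0\<bar> \<le> 1"
        using phi_bnd[OF b1 i, of v] phi_bnd[OF bidset_0 i, of v] by auto
      have h: "\<bar>Q.hh j (v i)\<bar> \<le> \<bar>Q.q (j-1)\<bar> + \<bar>Q.q j - Q.q (j-1)\<bar>"
        unfolding Q.hh_def by (auto simp: indicator_def)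
      have "\<bar>(phi i v ((real j - 1) / real K) - phi i v 0) * Q.hh j (v i)\<bar>
          = \<bar>phi i v ((real j - 1) / real K) - phi i v 0\<bar> * \<bar>Q.hh j (v i)\<bar>" by (simp add: abs_mult)
      also have "\<dots> \<le> 1 * (\<bar>Q.q (j-1)\<bar> + \<bar>Q.q j - Q.q (j-1)\<bar>)"
        using c h by (intro mult_mono) auto
      finally show "norm ((phi i v ((real j - 1) / real K) - phi i v 0) * Q.hh j (v i))
        \<le> \<bar>Q.q (j-1)\<bar> + \<bar>Q.q j - Q.q (j-1)\<bar>" by simp
    qed
    have m1: "(\<lambda>v. phi i v ((real j - 1) / real K)) \<in> borel_measurable (PiM I D)"
      by (rule phi_meas[OF i b1])
    have m2: "(\<lambda>v. phi i v 0) \<in> borel_measurable (PiM I D)"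
      by (rule phi_meas[OF i bidset_0])
    have m3: "(\<lambda>v. Q.hh j (v i)) \<in> borel_measurable (PiM I D)"
      using measurable_compose[OF measurable_component_singleton[of i I D] hm[of j]] i by auto
    show "(\<lambda>v. (phi i v ((real j - 1) / real K) - phi i v 0) * Q.hh j (v i)) \<in> borel_measurable (PiM I D)"
      using m1 m2 m3 by measurable
  qed
  have "integrable (PiM I D) (\<lambda>v. \<Sum>j=2..K+1. (phi i v ((real j - 1) / real K) - phi i v 0) * Q.hh j (v i))"
    by (intro Bochner_Integration.integrable_sum term_int)
  then show ?thesis using ptil_eq[OF i] by simp
qed

end

context auc
begin

definition D' :: "nat \<Rightarrow> real measure" where
  "D' l = (if l < n then D l else return borel 0)"

lemma D'_prob: "prob_space (D' l)"
  unfolding D'_def using D_prob by (auto intro: prob_space_return)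

lemma PS: "product_sigma_finite D'"
  unfolding product_sigma_finite_def
  using D'_prob by (auto intro: prob_space_imp_sigma_finite)

lemma PiM_D': "J \<subseteq> I \<Longrightarrow> PiM J D = PiM J D'"
  by (intro PiM_cong) (auto simp: D'_def)

lemma ptil_int_eq: assumes i: "i < n"
  shows "(\<integral>v. ptil n x ss v i \<partial>(PiM I D)) =
    (\<integral>w. (\<Sum>j=1..K. \<Sum>k=j+1..K+1.
              \<pi> i k * (x ((bids (I - {i}) ss w)(i := real j / real K)) i
                       - x ((bids (I - {i}) ss w)(i := (real j - 1) / real K)) i)
              * quantile (cdf_of (D i)) (cumul (\<pi> i) j))
            \<partial>(PiM (I - {i}) D))"
proof -
  interpret Q: qctx "D i" K "\<pi> i" by (rule Qi[OF i])
  interpret P: product_sigma_finite D' by (rule PS)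
  have ins: "insert i (I - {i}) = I" using i by auto
  have e1: "PiM I D = PiM (insert i (I - {i})) D'" using PiM_D'[of I] ins by simp
  have e2: "PiM (I - {i}) D = PiM (I - {i}) D'" using PiM_D'[of "I - {i}"] by auto
  have Di: "D' i = D i" using i by (simp add: D'_def)
  have int': "integrable (PiM (insert i (I - {i})) D') (\<lambda>v. ptil n x ss v i)"
    using ptil_int[OF i] e1 by simp
  have "(\<integral>v. ptil n x ss v i \<partial>(PiM I D)) =
      (\<integral>w. (\<integral>y. ptil n x ss (w(i:=y)) i \<partial>D' i) \<partial>PiM (I - {i}) D')"
    unfolding e1 by (rule P.product_integral_insert[OF _ _ int']) auto
  also have "\<dots> = (\<integral>w. (\<Sum>j=1..K. \<Sum>k=j+1..K+1.
              \<pi> i k * (x ((bids (I - {i}) ss w)(i := real j / real K)) i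
                       - x ((bids (I - {i}) ss w)(i := (real j - 1) / real K)) i)
              * quantile (cdf_of (D i)) (cumul (\<pi> i) j)) \<partial>PiM (I - {i}) D')"
  proof (rule Bochner_Integration.integral_cong[OF refl])
    fix w :: "nat \<Rightarrow> real"
    have "(\<integral>y. ptil n x ss (w(i:=y)) i \<partial>D' i) =
        (\<integral>y. (\<Sum>j=2..K+1. (phi i w ((real j - 1) / real K) - phi i w 0) * Q.hh j y) \<partial>D i)"
      unfolding Di ptil_eq[OF i] phi_ign by simp
    also have "\<dots> = (\<Sum>j=2..K+1. (phi i w ((real j - 1) / real K) - phi i w 0) * (\<integral>y. Q.hh j y \<partial>D i))"
      using Q.hh_int by (simp add: Bochner_Integration.integral_sum)
    also have "\<dots> = (\<Sum>j=2..K+1. (phi i w ((real j - 1) / real K) - phi i w 0) * Q.EE j)"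
      using Q.hh_E by (intro sum.cong) auto
    also have "\<dots> = (\<Sum>j=1..K. \<Sum>k=j+1..K+1. \<pi> i k * (phi i w (real j / real K) - phi i w ((real j - 1) / real K)) * Q.q j)"
      by (rule Q.alg)
    finally show "(\<integral>y. ptil n x ss (w(i:=y)) i \<partial>D' i) = (\<Sum>j=1..K. \<Sum>k=j+1..K+1.
              \<pi> i k * (x ((bids (I - {i}) ss w)(i := real j / real K)) i
                       - x ((bids (I - {i}) ss w)(i := (real j - 1) / real K)) i)
              * quantile (cdf_of (D i)) (cumul (\<pi> i) j))"
      unfolding phi_def Q.q_def .
  qed
  finally show ?thesis unfolding e2 .
qed

lemma main:
  shows "(\<integral>v. (\<Sum>i<n. ptil n x ss v i) \<partial>(PiM {..<n} D)) =
         (\<Sum>i<n. \<integral>w. (\<Sum>j=1..K. \<Sum>k=j+1..K+1.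
              \<pi> i k * (x ((bids ({..<n} - {i}) ss w)(i := real j / real K)) i
                       - x ((bids ({..<n} - {i}) ss w)(i := (real j - 1) / real K)) i)
              * quantile (cdf_of (D i)) (cumul (\<pi> i) j))
            \<partial>(PiM ({..<n} - {i}) D))"
proof -
  have e: "(\<integral>v. (\<Sum>i<n. ptil n x ss v i) \<partial>(PiM {..<n} D)) = (\<Sum>i<n. \<integral>v. ptil n x ss v i \<partial>(PiM {..<n} D))"
    using ptil_int by (intro Bochner_Integration.integral_sum) auto
  show ?thesis unfolding e using ptil_int_eq by (intro sum.cong) auto
qed

end

theorem mainTheorem7:
  fixes n K :: nat
    and D :: "nat \<Rightarrow> real measure"
    and x p :: "(nat \<Rightarrow> real) \<Rightarrow> nat \<Rightarrow> real"
    and \<pi> :: "nat \<Rightarrow> nat \<Rightarrow> real"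
  assumes K_pos: "0 < K"
    and D_prob: "\<And>i. i < n \<Longrightarrow> prob_space (D i)"
    and D_borel: "\<And>i. i < n \<Longrightarrow> sets (D i) = sets borel"
    and D_supp: "\<And>i. i < n \<Longrightarrow> measure (D i) {0..1} = 1"
    and D_cont: "\<And>i. i < n \<Longrightarrow> continuous_on UNIV (cdf_of (D i))"
    and M: "auction_format n K x p"
    and pi: "\<And>i. i < n \<Longrightarrow> prob_simplex K (\<pi> i)"
  defines "s \<equiv> (\<lambda>i. qstrat (cdf_of (D i)) K (\<pi> i))"
  shows "(\<integral>v. (\<Sum>i<n. ptil n x s v i) \<partial>(PiM {..<n} D)) =
         (\<Sum>i<n. \<integral>w. (\<Sum>j=1..K. \<Sum>k=j+1..K+1.
              \<pi> i k * (x ((bids ({..<n} - {i}) s w)(i := real j / real K)) i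
                       - x ((bids ({..<n} - {i}) s w)(i := (real j - 1) / real K)) i)
              * quantile (cdf_of (D i)) (cumul (\<pi> i) j))
            \<partial>(PiM ({..<n} - {i}) D))"
proof -
  interpret A: auc n K D x p \<pi>
    unfolding auc_def using K_pos D_prob D_borel D_supp D_cont M pi by blast
  have "s = A.ss" unfolding s_def A.ss_def by (rule ext) simp
  then show ?thesis using A.main by simp
qed

end
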